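(* Let $\Omega=\{\omega_1,\omega_2\}$ with $0<\omega_1<\omega_2$ and let $\mu^*$ be an aggregate market. Then every point in the interior of the surplus triangle of $\mu^*$ is rationalizable.
   Context: A monopolist with zero marginal cost sells one good to a unit mass of consumers with valuations in $\Omega$; a market is a probability vector over $\Omega$. Let $s(p,\omega)=p$ if $\omega\ge p$ and $0$ otherwise, $b(p,\omega)=\omega-p$ if $\omega\ge p$ and $0$ otherwise; in each market $\mu$ the monopolist charges $p^*(\mu)\in\arg\max_p\sum_i s(p,\omega_i)\mu_i$. A segmentation of $\mu^*$ is a finitely supported distribution $\tau$ over markets with $\sum_{\mu^s}\tau(\mu^s)\mu^s=\mu^*$. For a segmentation $\tau$, consumer surplus is $CS=\sum_{\mu^s}\tau(\mu^s)\sum_j b(p^*(\mu^s),\omega_j)\mu^s_j$ and producer surplus (excluding information cost) is $PS=\sum_{\mu^s}\tau(\mu^s)\sum_j s(p^*(\mu^s),\omega_j)\mu^s_j$. The surplus triangle of $\mu^*$ is the set of pairs $(CS,PS)$ with $CS\ge0$, $PS\ge\pi^*$ and $CS+PS\le w^*$, where $\pi^*=\max_p\sum_i s(p,\omega_i)\mu^*_i$ is the uniform monopoly profit and $w^*=\sum_i\omega_i\mu^*_i$ is the efficient total surplus. A posterior-separable, strictly convex cost function is one of the form $C(\tau)=\sum_{\mu^s}\tau(\mu^s)c(\mu^s)-c(\mu^* )$ with $c$ a strictly convex continuous function on markets (e.g. $c=-kH$ for Shannon entropy $H$). Given such $C$, a segmentation is optimal if it maximizes $\sum_{\mu^s}\tau(\mu^s)\sum_i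 s(p^*(\mu^s),\omega_i)\mu^s_i-C(\tau)$ over all segmentations of $\mu^*$. A pair $(CS,PS)$ is rationalizable if there exist a segmentation $\tau$ and a strictly convex posterior-separable cost function $C$ such that $\tau$ is optimal for the monopolist under $C$ and $\tau$ yields that $(CS,PS)$ pair. *)

theory Defs
  imports "HOL-Analysis.Analysis"
begin

text \<open>Two valuations w1 < w2.  A market is a pair (mass on w1, mass on w2)
  in the probability simplex.\<close>

definition markets :: "(real \<times> real) set" where
  "markets = {m. fst m \<ge> 0 \<and> snd m \<ge> 0 \<and> fst m + snd m = 1}"

definition sval :: "real \<Rightarrow> real \<Rightarrow> real" where
  "sval p w = (if w \<ge> p then p else 0)"

definition bval :: "real \<Rightarrow> real \<Rightarrow> real" where
  "bval p w = (if w \<ge> p then w - p else 0)"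

definition profit :: "real \<Rightarrow> real \<Rightarrow> real \<times> real \<Rightarrow> real \<Rightarrow> real" where
  "profit w1 w2 m p = sval p w1 * fst m + sval p w2 * snd m"

definition cons_surplus :: "real \<Rightarrow> real \<Rightarrow> real \<times> real \<Rightarrow> real \<Rightarrow> real" where
  "cons_surplus w1 w2 m p = bval p w1 * fst m + bval p w2 * snd m"

definition opt_price :: "real \<Rightarrow> real \<Rightarrow> real \<times> real \<Rightarrow> real \<Rightarrow> bool" where
  "opt_price w1 w2 m p \<longleftrightarrow> (\<forall>q. profit w1 w2 m q \<le> profit w1 w2 m p)"

definition max_profit :: "real \<Rightarrow> real \<Rightarrow> real \<times> real \<Rightarrow> real" where
  "max_profit w1 w2 m = (SUP p. profit w1 w2 m p)"

definition eff_surplus :: "real \<Rightarrow> real \<Rightarrow> real \<times> real \<Rightarrow> real" where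
  "eff_surplus w1 w2 m = w1 * fst m + w2 * snd m"

definition supp :: "((real \<times> real) \<Rightarrow> real) \<Rightarrow> (real \<times> real) set" where
  "supp \<tau> = {m. \<tau> m \<noteq> 0}"

definition segmentation :: "((real \<times> real) \<Rightarrow> real) \<Rightarrow> real \<times> real \<Rightarrow> bool" where
  "segmentation \<tau> mu \<longleftrightarrow> finite (supp \<tau>) \<and> (\<forall>m. \<tau> m \<ge> 0) \<and> supp \<tau> \<subseteq> markets \<and>
     (\<Sum>m\<in>supp \<tau>. \<tau> m) = 1 \<and> (\<Sum>m\<in>supp \<tau>. \<tau> m *\<^sub>R m) = mu"

definition strict_convex_on :: "'a::real_vector set \<Rightarrow> ('a \<Rightarrow> real) \<Rightarrow> bool" where
  "strict_convex_on S f \<longleftrightarrow> convex S \<and>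
    (\<forall>x\<in>S. \<forall>y\<in>S. \<forall>u. x \<noteq> y \<longrightarrow> 0 < u \<longrightarrow> u < 1 \<longrightarrow>
        f (u *\<^sub>R x + (1 - u) *\<^sub>R y) < u * f x + (1 - u) * f y)"

definition info_cost :: "((real \<times> real) \<Rightarrow> real) \<Rightarrow> real \<times> real \<Rightarrow> ((real \<times> real) \<Rightarrow> real) \<Rightarrow> real" where
  "info_cost c mu \<tau> = (\<Sum>m\<in>supp \<tau>. \<tau> m * c m) - c mu"

definition objective :: "real \<Rightarrow> real \<Rightarrow> ((real \<times> real) \<Rightarrow> real) \<Rightarrow> real \<times> real \<Rightarrow> ((real \<times> real) \<Rightarrow> real) \<Rightarrow> real" where
  "objective w1 w2 c mu \<tau> = (\<Sum>m\<in>supp \<tau>. \<tau> m * max_profit w1 w2 m) - info_cost c mu \<tau>"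

definition CS :: "real \<Rightarrow> real \<Rightarrow> ((real \<times> real) \<Rightarrow> real) \<Rightarrow> ((real \<times> real) \<Rightarrow> real) \<Rightarrow> real" where
  "CS w1 w2 \<tau> pr = (\<Sum>m\<in>supp \<tau>. \<tau> m * cons_surplus w1 w2 m (pr m))"

definition PS :: "real \<Rightarrow> real \<Rightarrow> ((real \<times> real) \<Rightarrow> real) \<Rightarrow> ((real \<times> real) \<Rightarrow> real) \<Rightarrow> real" where
  "PS w1 w2 \<tau> pr = (\<Sum>m\<in>supp \<tau>. \<tau> m * profit w1 w2 m (pr m))"

definition surplus_triangle :: "real \<Rightarrow> real \<Rightarrow> real \<times> real \<Rightarrow> (real \<times> real) set" where
  "surplus_triangle w1 w2 mu = {(x, y). x \<ge> 0 \<and> y \<ge> max_profit w1 w2 mu \<and> x + y \<le> eff_surplus w1 w2 mu}"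

definition rationalizable :: "real \<Rightarrow> real \<Rightarrow> real \<times> real \<Rightarrow> real \<times> real \<Rightarrow> bool" where
  "rationalizable w1 w2 mu z \<longleftrightarrow>
    (\<exists>\<tau> pr c. segmentation \<tau> mu \<and> (\<forall>m\<in>supp \<tau>. opt_price w1 w2 m (pr m)) \<and>
       strict_convex_on markets c \<and> continuous_on markets c \<and>
       (\<forall>\<tau>'. segmentation \<tau>' mu \<longrightarrow> objective w1 w2 c mu \<tau>' \<le> objective w1 w2 c mu \<tau>) \<and>
       CS w1 w2 \<tau> pr = fst z \<and> PS w1 w2 \<tau> pr = snd z)"

end

theory Submission
  imports Defs
begin

lemma profit_le:
  assumes "0 < w1" "w1 < w2" "m \<in> markets"
  shows "profit w1 w2 m p \<le> max w1 (w2 * snd m)"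
proof -
  have a: "fst m \<ge> 0" "snd m \<ge> 0" "fst m + snd m = 1" using assms(3) by (auto simp: markets_def)
  consider "p \<le> w1" | "w1 < p \<and> p \<le> w2" | "w2 < p" by linarith
  then show ?thesis
  proof cases
    case 1
    then have "profit w1 w2 m p = p * (fst m + snd m)" using assms
      by (simp add: profit_def sval_def algebra_simps)
    then show ?thesis using 1 a by simp
  next
    case 2
    then have "profit w1 w2 m p = p * snd m" using assms
      by (simp add: profit_def sval_def)
    then show ?thesis using 2 a by (smt (verit) mult_right_mono)
  next
    case 3
    then have "profit w1 w2 m p = 0" using assms
      by (simp add: profit_def sval_def)
    then show ?thesis using assms by simp
  qed
qed

lemma profit_w1:
  assumes "0 < w1" "w1 < w2" "m \<in> markets"
  shows "profit w1 w2 m w1 = w1"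
proof -
  have a: "fst m + snd m = 1" using assms(3) by (auto simp: markets_def)
  have "profit w1 w2 m w1 = w1 * (fst m + snd m)" using assms
    by (simp add: profit_def sval_def algebra_simps)
  then show ?thesis using a by simp
qed

lemma profit_w2:
  assumes "0 < w1" "w1 < w2"
  shows "profit w1 w2 m w2 = w2 * snd m"
  using assms by (simp add: profit_def sval_def)

lemma max_profit_eq:
  assumes "0 < w1" "w1 < w2" "m \<in> markets"
  shows "max_profit w1 w2 m = max w1 (w2 * snd m)"
proof -
  have "max w1 (w2 * snd m) \<in> range (profit w1 w2 m)"
    using profit_w1[OF assms] profit_w2[OF assms(1,2)]
    by (metis max_def rangeI)
  moreover have "\<forall>v\<in>range (profit w1 w2 m). v \<le> max w1 (w2 * snd m)"
    using profit_le[OF assms] by auto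
  ultimately show ?thesis unfolding max_profit_def by (metis cSup_eq_maximum)
qed

lemma quad_strict:
  fixes k p q u A B g :: real
  assumes "k > 0" "p \<noteq> q" "0 < u" "u < 1"
  shows "A + B*(u*p + (1-u)*q) + k*((u*p + (1-u)*q) - g)^2
     < u * (A + B*p + k*(p-g)^2) + (1-u) * (A + B*q + k*(q-g)^2)"
proof -
  have e: "u * (A + B*p + k*(p-g)^2) + (1-u) * (A + B*q + k*(q-g)^2)
     - (A + B*(u*p + (1-u)*q) + k*((u*p + (1-u)*q) - g)^2) = k*u*(1-u)*(p-q)^2"
    by (simp add: power2_eq_square algebra_simps)
  have "k*u*(1-u)*(p-q)^2 > 0" using assms by simp
  then show ?thesis using e by linarith
qed

lemma convex_markets: "convex markets"
proof (rule convexI)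
  fix x y :: "real \<times> real" and u v :: real
  assume x: "x \<in> markets" and y: "y \<in> markets" and uv0: "0 \<le> u" "0 \<le> v" "u + v = 1"
  note uv = uv0
  have xs: "fst x \<ge> 0" "snd x \<ge> 0" "fst x + snd x = 1" using x by (auto simp: markets_def)
  have ys: "fst y \<ge> 0" "snd y \<ge> 0" "fst y + snd y = 1" using y by (auto simp: markets_def)
  have "u * fst x + v * fst y + (u * snd x + v * snd y) = u * (fst x + snd x) + v * (fst y + snd y)"
    by (simp add: algebra_simps)
  also have "\<dots> = 1" using xs ys uv by simp
  finally have "u * fst x + v * fst y + (u * snd x + v * snd y) = 1" .
  moreover have "u * fst x + v * fst y \<ge> 0" "u * snd x + v * snd y \<ge> 0"
    using xs ys uv by simp_all
  ultimately show "u *\<^sub>R x + v *\<^sub>R y \<in> markets" unfolding markets_def by simp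
qed


lemma interior_pts:
  assumes "z \<in> interior (surplus_triangle w1 w2 mu)"
  shows "fst z > 0" "snd z > max_profit w1 w2 mu" "fst z + snd z < eff_surplus w1 w2 mu"
proof -
  obtain e where e: "e > 0" "ball z e \<subseteq> surplus_triangle w1 w2 mu"
    using assms mem_interior by blast
  obtain x y where z: "z = (x, y)" by fastforce
  have d: "dist (x, y) (x + a, y + b) = sqrt (a^2 + b^2)" for a b
    by (simp add: dist_Pair_Pair dist_real_def)
  have "(x - e/2, y) \<in> ball z e" using e z d[of "-e/2" 0] by (simp add: dist_commute)
  then have 1: "x - e/2 \<ge> 0" using e(2) by (auto simp: surplus_triangle_def)
  have "(x, y - e/2) \<in> ball z e" using e z d[of 0 "-e/2"] by (simp add: dist_commute)
  then have 2: "y - e/2 \<ge> max_profit w1 w2 mu" using e(2) by (auto simp: surplus_triangle_def)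
  have "(x + e/2, y) \<in> ball z e" using e z d[of "e/2" 0] by (simp add: dist_commute)
  then have 3: "x + e/2 + y \<le> eff_surplus w1 w2 mu" using e(2) by (auto simp: surplus_triangle_def)
  show "fst z > 0" "snd z > max_profit w1 w2 mu" "fst z + snd z < eff_surplus w1 w2 mu"
    using 1 2 3 e(1) z by auto
qed


theorem proposition5:
  fixes w1 w2 :: real and mu :: "real \<times> real" and z :: "real \<times> real"
  assumes "0 < w1" and "w1 < w2" and "mu \<in> markets"
    and "z \<in> interior (surplus_triangle w1 w2 mu)"
  shows "rationalizable w1 w2 mu z"
proof -
  note w = assms(1,2)
  define b where "b = snd mu"
  define x where "x = fst z"
  define y where "y = snd z"
  have mu: "mu = (1 - b, b)" "0 \<le> b" "b \<le> 1" "fst mu = 1 - b" using assms(3) unfolding b_def markets_def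
    by (auto simp: prod_eq_iff)
  have ip: "x > 0" "y > max w1 (w2 * b)" "x + y < w1 * (1 - b) + w2 * b"
    using interior_pts[OF assms(4)] max_profit_eq[OF w assms(3)] mu(4)
    unfolding x_def y_def eff_surplus_def b_def by auto
  define u where "u = x / (w2 - w1)"
  define D where "D = w1 * (1 - b) + w2 * b - x - y"
  define s where "s = b - u + D / w1"
  define t where "t = 1 - s"
  define bL where "bL = u / t"
  define bH where "bH = (b - u) / s"
  have D: "D > 0" using ip unfolding D_def by simp
  have u: "u > 0" "(w2 - w1) * u = x" using ip w unfolding u_def by auto
  have c1: "(w2 - w1) * (b - u) > D" using u ip unfolding D_def by (simp add: algebra_simps)
  have "b - u > 0" using c1 D w by (smt (verit) mult_nonneg_nonpos)
  then have s: "s > 0" using D w unfolding s_def by (smt (verit) divide_pos_pos)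
  have tw: "w1 * t = w1 * (1 - b) + w1 * u - D" and c2: "w1 * t > w2 * u"
  proof -
    show tw: "w1 * t = w1 * (1 - b) + w1 * u - D" unfolding t_def s_def using w
      by (simp add: algebra_simps)
    then show "w1 * t > w2 * u" using u ip unfolding D_def by (simp add: algebra_simps)
  qed
  have "w2 * u > 0" using u w by simp
  then have "w1 * t > 0" using c2 by linarith
  then have t: "t > 0" using w by (simp add: zero_less_mult_iff)
  have st: "s + t = 1" unfolding t_def by simp
  have bL: "bL > 0" "w2 * bL < w1" "t * bL = u"
    using c2 t u unfolding bL_def by (auto simp: field_simps)
  have bH: "bH < 1" "w2 * bH > w1" "s * bH = b - u" "bH > 0"
  proof -
    show "s * bH = b - u" using s unfolding bH_def by simp
    have "s - (b - u) = D / w1" unfolding s_def by simp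
    then have "b - u < s" using D w by (smt (verit) divide_pos_pos)
    then show "bH < 1" using s unfolding bH_def by simp
    have "w1 * s = w1 * (b - u) + D" unfolding s_def using w by (simp add: algebra_simps)
    then have "w1 * s < w2 * (b - u)" using c1 by (simp add: algebra_simps)
    then show "w2 * bH > w1" using s unfolding bH_def by (simp add: field_simps)
    show "bH > 0" using s \<open>b - u > 0\<close> unfolding bH_def by simp
  qed
  have "w2 * bL < w2 * bH" using bL bH by linarith
  then have LH: "bL < bH" using w by simp
  define mL where "mL = (1 - bL, bL)"
  define mH where "mH = (1 - bH, bH)"
  have mLH: "mL \<noteq> mH" using LH unfolding mL_def mH_def by auto
  have mkt: "mL \<in> markets" "mH \<in> markets"
    using bL bH w LH unfolding mL_def mH_def markets_def by auto
  define \<tau> where "\<tau> = (\<lambda>m. if m = mL then t else if m = mH then s else 0)"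
  have supp: "supp \<tau> = {mL, mH}" using t s mLH unfolding supp_def \<tau>_def by auto
  define pr where "pr = (\<lambda>m. if m = mL then w1 else w2)"
  define k1 where "k1 = (w2 * bH - w1) / (bH - bL)^2"
  define k2 where "k2 = (w1 - w2 * bL) / (bH - bL)^2"
  have k: "k1 > 0" "k2 > 0" using bL bH LH unfolding k1_def k2_def by auto
  define c where "c = (\<lambda>m::real\<times>real. max (w1 + k1 * (snd m - bL)^2) (w2 * snd m + k2 * (snd m - bH)^2))"
  have cL: "c mL = w1"
  proof -
    have "k2 * (bL - bH)^2 = w1 - w2 * bL" unfolding k2_def using LH
      by (simp add: power2_commute)
    then show ?thesis unfolding c_def mL_def by simp
  qed
  have cH: "c mH = w2 * bH"
  proof -
    have "k1 * (bH - bL)^2 = w2 * bH - w1" unfolding k1_def using LH by simp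
    then show ?thesis unfolding c_def mH_def by simp
  qed
  have cge: "max_profit w1 w2 m \<le> c m" if "m \<in> markets" for m
    using max_profit_eq[OF w that] k unfolding c_def
    by (smt (verit) zero_le_power2 mult_nonneg_nonneg)
  have mpL: "max_profit w1 w2 mL = w1" using max_profit_eq[OF w mkt(1)] bL unfolding mL_def by simp
  have mpH: "max_profit w1 w2 mH = w2 * bH" using max_profit_eq[OF w mkt(2)] bH unfolding mH_def by simp
  have seg: "segmentation \<tau> mu"
    unfolding segmentation_def
  proof (intro conjI allI)
    show "finite (supp \<tau>)" using supp by simp
    show "0 \<le> \<tau> m" for m using t s unfolding \<tau>_def by simp
    show "supp \<tau> \<subseteq> markets" using supp mkt by simp
    show "sum \<tau> (supp \<tau>) = 1" using supp mLH st unfolding \<tau>_def by simp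
    have "(\<Sum>m\<in>supp \<tau>. \<tau> m *\<^sub>R m) = t *\<^sub>R mL + s *\<^sub>R mH"
      using supp mLH unfolding \<tau>_def by simp
    also have "\<dots> = mu" using mu(1) bL(3) bH(3) st unfolding mL_def mH_def
      by (simp add: algebra_simps)
    finally show "(\<Sum>m\<in>supp \<tau>. \<tau> m *\<^sub>R m) = mu" .
  qed
  have opt: "\<forall>m\<in>supp \<tau>. opt_price w1 w2 m (pr m)"
  proof
    fix m assume "m \<in> supp \<tau>"
    then have "m = mL \<or> m = mH" using supp by simp
    then show "opt_price w1 w2 m (pr m)"
    proof
      assume m: "m = mL"
      show ?thesis unfolding opt_price_def pr_def using m profit_le[OF w mkt(1)] profit_w1[OF w mkt(1)]
        mpL max_profit_eq[OF w mkt(1)] by simp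
    next
      assume m: "m = mH"
      show ?thesis unfolding opt_price_def pr_def using m mLH profit_le[OF w mkt(2)] profit_w2[OF w]
        mpH max_profit_eq[OF w mkt(2)] unfolding mH_def by simp
    qed
  qed
  have sc: "strict_convex_on markets c"
    unfolding strict_convex_on_def
  proof (intro conjI ballI allI impI)
    show "convex markets" by (rule convex_markets)
    fix p q :: "real \<times> real" and v :: real
    assume p: "p \<in> markets" and q: "q \<in> markets" and pq: "p \<noteq> q" and v: "0 < v" "v < 1"
    have "snd p \<noteq> snd q" using p q pq unfolding markets_def by (auto simp: prod_eq_iff)
    then have
      A: "w1 + 0 * (v * snd p + (1 - v) * snd q) + k1 * ((v * snd p + (1 - v) * snd q) - bL)^2
         < v * (w1 + 0 * snd p + k1 * (snd p - bL)^2) + (1 - v) * (w1 + 0 * snd q + k1 * (snd q - bL)^2)"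
      and B: "0 + w2 * (v * snd p + (1 - v) * snd q) + k2 * ((v * snd p + (1 - v) * snd q) - bH)^2
         < v * (0 + w2 * snd p + k2 * (snd p - bH)^2) + (1 - v) * (0 + w2 * snd q + k2 * (snd q - bH)^2)"
      using quad_strict k v by blast+
    have "snd (v *\<^sub>R p + (1 - v) *\<^sub>R q) = v * snd p + (1 - v) * snd q" by simp
    moreover have "v * (w1 + k1 * (snd p - bL)^2) \<le> v * c p"
      "(1 - v) * (w1 + k1 * (snd q - bL)^2) \<le> (1 - v) * c q"
      "v * (w2 * snd p + k2 * (snd p - bH)^2) \<le> v * c p"
      "(1 - v) * (w2 * snd q + k2 * (snd q - bH)^2) \<le> (1 - v) * c q"
      using v unfolding c_def by (auto intro!: mult_left_mono)
    ultimately show "c (v *\<^sub>R p + (1 - v) *\<^sub>R q) < v * c p + (1 - v) * c q"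
      using A B unfolding c_def by simp
  qed
  have cc: "continuous_on markets c" unfolding c_def by (intro continuous_intros)
  have obj_le: "objective w1 w2 c mu \<tau>' \<le> c mu" if "segmentation \<tau>' mu" for \<tau>'
  proof -
    have "(\<Sum>m\<in>supp \<tau>'. \<tau>' m * max_profit w1 w2 m) \<le> (\<Sum>m\<in>supp \<tau>'. \<tau>' m * c m)"
      using that cge unfolding segmentation_def by (intro sum_mono mult_left_mono) auto
    then show ?thesis unfolding objective_def info_cost_def by simp
  qed
  have obj_eq: "objective w1 w2 c mu \<tau> = c mu"
    unfolding objective_def info_cost_def supp using mLH cL cH mpL mpH unfolding \<tau>_def by simp
  have xx: "x = (w2 - w1) * (t * bL)" using bL(3) u(2) by simp
  have CSv: "CS w1 w2 \<tau> pr = x"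
    unfolding CS_def supp xx using mLH w
    by (simp add: \<tau>_def pr_def cons_surplus_def bval_def mL_def mH_def algebra_simps)
  have PSv: "PS w1 w2 \<tau> pr = y"
  proof -
    have "PS w1 w2 \<tau> pr = t * w1 + s * (w2 * bH)"
      unfolding PS_def supp using mLH w profit_w1[OF w mkt(1)] profit_w2[OF w]
      by (simp add: \<tau>_def pr_def mH_def)
    also have "\<dots> = t * w1 + w2 * (b - u)" using bH(3) by (metis mult.left_commute)
    also have "\<dots> = y"
    proof -
      have "w2 * u - w1 * u = x" using u(2) by (simp add: algebra_simps)
      then show ?thesis using tw unfolding D_def by (simp add: algebra_simps)
    qed
    finally show ?thesis .
  qed
  have OL: "\<forall>\<tau>'. segmentation \<tau>' mu \<longrightarrow> objective w1 w2 c mu \<tau>' \<le> objective w1 w2 c mu \<tau>"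
    using obj_le obj_eq by simp
  have CS': "CS w1 w2 \<tau> pr = fst z" using CSv unfolding x_def .
  have PS': "PS w1 w2 \<tau> pr = snd z" using PSv unfolding y_def .
  show ?thesis unfolding rationalizable_def
    apply (rule exI[of _ \<tau>], rule exI[of _ pr], rule exI[of _ c])
    by (rule conjI[OF seg conjI[OF opt conjI[OF sc conjI[OF cc conjI[OF OL conjI[OF CS' PS']]]]]])
qed

end
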